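(* Let $(\eta_t)$ be an irreducible continuous-time Markov chain on a finite set $E$ with jump rates $R(\eta,\xi)$ and invariant probability $\mu$. Let $R^s(\eta,\xi)=\tfrac12\{R(\eta,\xi)+\mu(\xi)R(\xi,\eta)/\mu(\eta)\}$ be the rates of the reversible chain, and denote by $\mathrm{Cap}$ and $\mathrm{Cap}^s$ the capacities with respect to the original and the reversible chain. Then for any two disjoint nonempty subsets $A,B$ of $E$, $$\mathrm{Cap}^s(A,B)\le\mathrm{Cap}(A,B)\le2|E|\,\mathrm{Cap}^s(A,B).$$
   Context: For a chain on $E$ with rates $Q(\eta,\xi)$, holding rates $\lambda(\eta)=\sum_{\xi\ne\eta}Q(\eta,\xi)$ and invariant probability $\mu$, the capacity between disjoint nonempty $A,B$ is $\sum_{\eta\in A}\mu(\eta)\lambda(\eta)\mathbb P_\eta[H_B<H^+_A]$, where $H_B=\inf\{t>0:\eta_t\in B\}$, $H^+_A=\inf\{t>\tau_1:\eta_t\in A\}$ and $\tau_1$ is the first jump time. (The reversible chain with rates $R^s$ has $\mu$ as reversible invariant measure.) *)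

theory Defs
  imports Complex_Main
begin

text \<open>Continuous-time Markov chain on a finite state set E with rates Q x y (x \<noteq> y);
  diagonal values of Q are ignored.\<close>

definition hold_rate :: "'a set \<Rightarrow> ('a \<Rightarrow> 'a \<Rightarrow> real) \<Rightarrow> 'a \<Rightarrow> real" where
  "hold_rate E Q x = (\<Sum>y\<in>E - {x}. Q x y)"

definition jump_prob :: "'a set \<Rightarrow> ('a \<Rightarrow> 'a \<Rightarrow> real) \<Rightarrow> 'a \<Rightarrow> 'a \<Rightarrow> real" where
  "jump_prob E Q x y = (if y = x then 0 else Q x y / hold_rate E Q x)"

fun path_weight :: "'a set \<Rightarrow> ('a \<Rightarrow> 'a \<Rightarrow> real) \<Rightarrow> 'a list \<Rightarrow> real" where
  "path_weight E Q (x # y # rest) = jump_prob E Q x y * path_weight E Q (y # rest)"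
| "path_weight E Q _ = 1"

text \<open>P_x[H_B < H_A^+]: the chain started at x, after its first jump, enters B at
  jump number n+1 without having visited A \<union> B at jumps 1..n. Summed over n.\<close>
definition escape_prob :: "'a set \<Rightarrow> ('a \<Rightarrow> 'a \<Rightarrow> real) \<Rightarrow> 'a set \<Rightarrow> 'a set \<Rightarrow> 'a \<Rightarrow> real" where
  "escape_prob E Q A B x =
     (\<Sum>n. \<Sum>xs\<in>{xs. length xs = Suc n \<and> set xs \<subseteq> E \<and> last xs \<in> B \<and>
                         (\<forall>i<n. xs ! i \<notin> A \<union> B)}.
            path_weight E Q (x # xs))"

definition capacity ::
  "'a set \<Rightarrow> ('a \<Rightarrow> 'a \<Rightarrow> real) \<Rightarrow> ('a \<Rightarrow> real) \<Rightarrow> 'a set \<Rightarrow> 'a set \<Rightarrow> real" where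
  "capacity E Q \<mu> A B = (\<Sum>x\<in>A. \<mu> x * hold_rate E Q x * escape_prob E Q A B x)"

definition reversible_rates :: "('a \<Rightarrow> 'a \<Rightarrow> real) \<Rightarrow> ('a \<Rightarrow> real) \<Rightarrow> 'a \<Rightarrow> 'a \<Rightarrow> real" where
  "reversible_rates R \<mu> x y = (R x y + \<mu> y * R y x / \<mu> x) / 2"

definition irreducible :: "'a set \<Rightarrow> ('a \<Rightarrow> 'a \<Rightarrow> real) \<Rightarrow> bool" where
  "irreducible E Q \<longleftrightarrow>
     (\<forall>x\<in>E. \<forall>y\<in>E. (x, y) \<in> {(u, v). u \<in> E \<and> v \<in> E \<and> u \<noteq> v \<and> Q u v > 0}\<^sup>*)"

definition invariant_prob :: "'a set \<Rightarrow> ('a \<Rightarrow> 'a \<Rightarrow> real) \<Rightarrow> ('a \<Rightarrow> real) \<Rightarrow> bool" where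
  "invariant_prob E Q \<mu> \<longleftrightarrow>
     (\<forall>x\<in>E. \<mu> x \<ge> 0) \<and> (\<Sum>x\<in>E. \<mu> x) = 1 \<and>
     (\<forall>y\<in>E. (\<Sum>x\<in>E - {y}. \<mu> x * Q x y) = \<mu> y * hold_rate E Q y)"

end

theory Submission
  imports Defs
begin


lemma sum_lists_Suc:
  fixes E :: "'a set" and P :: "'a list \<Rightarrow> bool" and f :: "'a list \<Rightarrow> real"
  assumes fin: "finite E"
  shows "(\<Sum>xs\<in>{xs. length xs = Suc n \<and> set xs \<subseteq> E \<and> P xs}. f xs) =
         (\<Sum>y\<in>E. \<Sum>ys\<in>{ys. length ys = n \<and> set ys \<subseteq> E \<and> P (y#ys)}. f (y#ys))"
proof -
  let ?S = "SIGMA y:E. {ys. length ys = n \<and> set ys \<subseteq> E \<and> P (y#ys)}"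
  have eq: "{xs. length xs = Suc n \<and> set xs \<subseteq> E \<and> P xs} = (\<lambda>(y,ys). y#ys) ` ?S"
    by (auto simp: length_Suc_conv image_iff)
  have inj: "inj_on (\<lambda>(y,ys). y#ys) ?S" by (auto simp: inj_on_def)
  have fn: "\<And>y. finite {ys. length ys = n \<and> set ys \<subseteq> E \<and> P (y#ys)}"
    by (rule finite_subset[OF _ finite_lists_length_eq[OF fin, of n]]) auto
  have "(\<Sum>xs\<in>{xs. length xs = Suc n \<and> set xs \<subseteq> E \<and> P xs}. f xs) = (\<Sum>(y,ys)\<in>?S. f (y#ys))"
    unfolding eq by (subst sum.reindex[OF inj]) (simp add: case_prod_unfold)
  also have "\<dots> = (\<Sum>y\<in>E. \<Sum>ys\<in>{ys. length ys = n \<and> set ys \<subseteq> E \<and> P (y#ys)}. f (y#ys))"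
    by (rule sum.Sigma[symmetric]) (use fin fn in auto)
  finally show ?thesis .
qed

locale ctmc =
  fixes E :: "'a set" and Q :: "'a \<Rightarrow> 'a \<Rightarrow> real" and \<mu> :: "'a \<Rightarrow> real" and A B :: "'a set"
  assumes fin: "finite E" and AE: "A \<subseteq> E" and BE: "B \<subseteq> E" and disj: "A \<inter> B = {}"
    and mu_nonneg: "\<And>x. x \<in> E \<Longrightarrow> 0 \<le> \<mu> x"
    and nonneg: "\<And>x y. x \<in> E \<Longrightarrow> y \<in> E \<Longrightarrow> x \<noteq> y \<Longrightarrow> Q x y \<ge> 0"
    and hpos: "\<And>x. x \<in> E \<Longrightarrow> hold_rate E Q x > 0"
    and inv: "\<And>y. y \<in> E \<Longrightarrow> (\<Sum>x\<in>E-{y}. \<mu> x * Q x y) = \<mu> y * hold_rate E Q y"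
begin

abbreviation "p \<equiv> jump_prob E Q"

lemma p_nonneg: "x \<in> E \<Longrightarrow> y \<in> E \<Longrightarrow> 0 \<le> p x y"
  unfolding jump_prob_def using nonneg[of x y] hpos[of x] by auto

lemma p_sum: assumes "x \<in> E" shows "(\<Sum>y\<in>E. p x y) = 1"
proof -
  have "(\<Sum>y\<in>E. p x y) = p x x + (\<Sum>y\<in>E-{x}. p x y)" using sum.remove[OF fin assms] by blast
  also have "\<dots> = (\<Sum>y\<in>E-{x}. Q x y / hold_rate E Q x)" by (simp add: jump_prob_def)
  also have "\<dots> = 1" using hpos[OF assms] by (simp add: sum_divide_distrib[symmetric] hold_rate_def)
  finally show ?thesis .
qed

lemma pw_nonneg: "set l \<subseteq> E \<Longrightarrow> 0 \<le> path_weight E Q l"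
  by (induction l rule: induct_list012) (auto intro!: mult_nonneg_nonneg p_nonneg)

definition "Pset n y = {ys. length ys = n \<and> set ys \<subseteq> E \<and> last (y#ys) \<in> B \<and> (\<forall>i<n. (y#ys)!i \<notin> A \<union> B)}"
definition "g n y = (\<Sum>ys\<in>Pset n y. path_weight E Q (y#ys))"

lemma g0: "g 0 y = (if y \<in> B then 1 else 0)"
proof -
  have "Pset 0 y = (if y \<in> B then {[]} else {})" by (auto simp: Pset_def)
  then show ?thesis by (simp add: g_def)
qed

lemma gSuc: "g (Suc n) y = (if y \<in> A \<union> B then 0 else \<Sum>z\<in>E. p y z * g n z)"
proof -
  have "g (Suc n) y = (\<Sum>ys\<in>{ys. length ys = Suc n \<and> set ys \<subseteq> E \<and>
      (last (y#ys) \<in> B \<and> (\<forall>i<Suc n. (y#ys)!i \<notin> A \<union> B))}. path_weight E Q (y#ys))"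
    by (simp add: g_def Pset_def)
  also have "\<dots> = (\<Sum>z\<in>E. \<Sum>zs\<in>{zs. length zs = n \<and> set zs \<subseteq> E \<and>
      (last (y#z#zs) \<in> B \<and> (\<forall>i<Suc n. (y#z#zs)!i \<notin> A \<union> B))}. path_weight E Q (y#z#zs))"
    by (rule sum_lists_Suc[OF fin])
  also have "\<dots> = (if y \<in> A \<union> B then 0 else \<Sum>z\<in>E. p y z * g n z)"
  proof (cases "y \<in> A \<union> B")
    case True
    have "\<And>z. {zs. length zs = n \<and> set zs \<subseteq> E \<and>
      (last (y#z#zs) \<in> B \<and> (\<forall>i<Suc n. (y#z#zs)!i \<notin> A \<union> B))} = {}"
      using True by (auto simp: All_less_Suc2)
    then have z: "(\<Sum>z\<in>E. \<Sum>zs\<in>{zs. length zs = n \<and> set zs \<subseteq> E \<and>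
      (last (y#z#zs) \<in> B \<and> (\<forall>i<Suc n. (y#z#zs)!i \<notin> A \<union> B))}. path_weight E Q (y#z#zs)) = 0"
      by (simp only: sum.empty sum.neutral_const)
    show ?thesis unfolding z using True by simp
  next
    case False
    have "\<And>z. {zs. length zs = n \<and> set zs \<subseteq> E \<and>
      (last (y#z#zs) \<in> B \<and> (\<forall>i<Suc n. (y#z#zs)!i \<notin> A \<union> B))} = Pset n z"
      using False by (auto simp: Pset_def All_less_Suc2)
    then show ?thesis using False by (simp add: g_def sum_distrib_left)
  qed
  finally show ?thesis .
qed

lemma g_nonneg: "y \<in> E \<Longrightarrow> 0 \<le> g n y"
  unfolding g_def Pset_def by (intro sum_nonneg pw_nonneg) auto

lemma gsum_le: "y \<in> E \<Longrightarrow> (\<Sum>n<N. g n y) \<le> 1"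
proof (induction N arbitrary: y)
  case 0 then show ?case by simp
next
  case (Suc N)
  have "(\<Sum>n<Suc N. g n y) = g 0 y + (\<Sum>n<N. g (Suc n) y)" by (rule sum.lessThan_Suc_shift)
  also have "\<dots> \<le> 1"
  proof (cases "y \<in> A \<union> B")
    case True then show ?thesis using disj by (auto simp: g0 gSuc)
  next
    case False
    have "(\<Sum>n<N. g (Suc n) y) = (\<Sum>z\<in>E. p y z * (\<Sum>n<N. g n z))"
      using False by (simp add: gSuc sum_distrib_left sum.swap[of _ "{..<N}"])
    also have "\<dots> \<le> (\<Sum>z\<in>E. p y z * 1)"
      by (intro sum_mono mult_left_mono Suc.IH p_nonneg Suc.prems)
    also have "\<dots> = 1" using p_sum[OF Suc.prems] by simp
    finally show ?thesis using False by (simp add: g0)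
  qed
  finally show ?case .
qed

lemma summable_g: "y \<in> E \<Longrightarrow> summable (\<lambda>n. g n y)"
  by (rule summableI_nonneg_bounded[where x=1]) (auto intro: g_nonneg gsum_le)

definition "G y = (\<Sum>n. g n y)"
definition "h y = 1 - G y"

lemma G_nonneg: "y \<in> E \<Longrightarrow> 0 \<le> G y"
  unfolding G_def by (intro suminf_nonneg summable_g g_nonneg)

lemma G_le1: "y \<in> E \<Longrightarrow> G y \<le> 1"
  unfolding G_def by (intro suminf_le_const summable_g gsum_le)

lemma G_rec: assumes "y \<in> E"
  shows "G y = (if y \<in> B then 1 else 0) + (if y \<in> A \<union> B then 0 else \<Sum>z\<in>E. p y z * G z)"
proof -
  have "G y = g 0 y + (\<Sum>n. g (Suc n) y)"
    unfolding G_def using suminf_split_head[OF summable_g[OF assms]] by simp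
  also have "(\<Sum>n. g (Suc n) y) = (if y \<in> A \<union> B then 0 else \<Sum>z\<in>E. p y z * G z)"
  proof (cases "y \<in> A \<union> B")
    case False
    have "(\<Sum>n. g (Suc n) y) = (\<Sum>n. \<Sum>z\<in>E. p y z * g n z)" using False by (simp add: gSuc)
    also have "\<dots> = (\<Sum>z\<in>E. \<Sum>n. p y z * g n z)"
      by (rule suminf_sum) (intro summable_mult summable_g)
    also have "\<dots> = (\<Sum>z\<in>E. p y z * G z)"
      unfolding G_def by (intro sum.cong refl suminf_mult summable_g)
    finally show ?thesis using False by simp
  qed (simp add: gSuc)
  finally show ?thesis by (simp add: g0)
qed

lemma escape_eq: "escape_prob E Q A B x = (\<Sum>y\<in>E. p x y * G y)"
proof -
  have "escape_prob E Q A B x = (\<Sum>n. \<Sum>y\<in>E. p x y * g n y)"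
    unfolding escape_prob_def
    by (subst sum_lists_Suc[OF fin]) (simp add: g_def Pset_def sum_distrib_left)
  also have "\<dots> = (\<Sum>y\<in>E. \<Sum>n. p x y * g n y)"
    by (rule suminf_sum) (intro summable_mult summable_g)
  also have "\<dots> = (\<Sum>y\<in>E. p x y * G y)"
    unfolding G_def by (intro sum.cong refl suminf_mult summable_g)
  finally show ?thesis .
qed

end


context ctmc begin

definition "w x y = (if x = y then 0 else \<mu> x * Q x y)"

lemma w_p: "x \<in> E \<Longrightarrow> w x y = \<mu> x * hold_rate E Q x * p x y"
  using hpos[of x] by (auto simp: w_def jump_prob_def)

lemma inv_w: assumes "y \<in> E" shows "(\<Sum>x\<in>E. w x y) = (\<Sum>x\<in>E. w y x)"
proof -
  have "(\<Sum>x\<in>E. w x y) = w y y + (\<Sum>x\<in>E-{y}. w x y)" using sum.remove[OF fin assms] by blast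
  also have "\<dots> = (\<Sum>x\<in>E-{y}. \<mu> x * Q x y)" by (simp add: w_def)
  also have "\<dots> = \<mu> y * hold_rate E Q y" by (rule inv[OF assms])
  also have "\<dots> = (\<Sum>x\<in>E-{y}. w y x)" unfolding hold_rate_def sum_distrib_left by (rule sum.cong) (auto simp: w_def)
  also have "\<dots> = (\<Sum>x\<in>E. w y x)" using sum.remove[OF fin assms, of "w y"] by (simp add: w_def)
  finally show ?thesis .
qed

lemma h_A: assumes "x \<in> A" shows "h x = 1"
proof -
  have "x \<in> E" "x \<notin> B" using assms AE disj by auto
  then show ?thesis using G_rec[of x] assms by (simp add: h_def)
qed
lemma h_B: assumes "x \<in> B" shows "h x = 0"
proof -
  have "x \<in> E" "x \<notin> A" using assms BE disj by auto
  then show ?thesis using G_rec[of x] assms by (simp add: h_def)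
qed
lemma h_bounds: "x \<in> E \<Longrightarrow> 0 \<le> h x \<and> h x \<le> 1"
  using G_nonneg G_le1 by (auto simp: h_def)

lemma harmonic: assumes "x \<in> E" "x \<notin> A \<union> B"
  shows "(\<Sum>y\<in>E. w x y * (h x - h y)) = 0"
proof -
  have Gx: "G x = (\<Sum>z\<in>E. p x z * G z)" using G_rec[OF assms(1)] assms(2) by simp
  have "(\<Sum>y\<in>E. w x y * (h x - h y)) = \<mu> x * hold_rate E Q x * ((\<Sum>y\<in>E. p x y * G y) - (\<Sum>y\<in>E. p x y) * G x)"
    by (simp add: w_p[OF assms(1)] h_def sum_distrib_left sum_distrib_right sum_subtractf algebra_simps)
  also have "\<dots> = 0" using Gx p_sum[OF assms(1)] by simp
  finally show ?thesis .
qed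

lemma cap_formula:
  assumes "\<And>x. x \<in> A \<Longrightarrow> f x = 1" "\<And>x. x \<in> B \<Longrightarrow> f x = 0"
  shows "capacity E Q \<mu> A B = (\<Sum>x\<in>E. f x * (\<Sum>y\<in>E. w x y * (h x - h y)))"
proof -
  have "capacity E Q \<mu> A B = (\<Sum>x\<in>A. \<Sum>y\<in>E. w x y * (h x - h y))"
    unfolding capacity_def
  proof (intro sum.cong refl)
    fix x assume x: "x \<in> A"
    then have xE: "x \<in> E" using AE by auto
    have G0: "G x = 0" using h_A[OF x] by (simp add: h_def)
    show "\<mu> x * hold_rate E Q x * escape_prob E Q A B x = (\<Sum>y\<in>E. w x y * (h x - h y))"
      by (simp add: escape_eq w_p[OF xE] h_def G0 sum_distrib_left algebra_simps)
  qed
  also have "\<dots> = (\<Sum>x\<in>E. f x * (\<Sum>y\<in>E. w x y * (h x - h y)))"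
  proof (rule sum.mono_neutral_cong_left[OF fin AE])
    show "\<forall>x\<in>E - A. f x * (\<Sum>y\<in>E. w x y * (h x - h y)) = 0"
      using assms(2) harmonic by auto
  qed (simp add: assms(1))
  finally show ?thesis .
qed

lemma energy: "(\<Sum>x\<in>E. f x * (\<Sum>y\<in>E. w x y * (f x - f y))) =
   (\<Sum>x\<in>E. \<Sum>y\<in>E. w x y * (f x - f y)^2) / 2"
proof -
  define a where "a = (\<Sum>x\<in>E. \<Sum>y\<in>E. w x y * f x ^ 2)"
  define b where "b = (\<Sum>x\<in>E. \<Sum>y\<in>E. w x y * f y ^ 2)"
  define c where "c = (\<Sum>x\<in>E. \<Sum>y\<in>E. w x y * f x * f y)"
  have ba: "b = a"
  proof -
    have "b = (\<Sum>y\<in>E. f y ^ 2 * (\<Sum>x\<in>E. w x y))"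
      unfolding b_def by (subst sum.swap) (simp add: sum_distrib_left mult.commute)
    also have "\<dots> = (\<Sum>y\<in>E. f y ^ 2 * (\<Sum>x\<in>E. w y x))" using inv_w by simp
    also have "\<dots> = a" unfolding a_def
    proof (rule sum.cong[OF refl])
      fix x show "f x ^ 2 * (\<Sum>y\<in>E. w x y) = (\<Sum>y\<in>E. w x y * f x ^ 2)"
        by (simp add: sum_distrib_right mult.commute)
    qed
    finally show ?thesis .
  qed
  have l: "(\<Sum>x\<in>E. f x * (\<Sum>y\<in>E. w x y * (f x - f y))) = a - c"
    unfolding a_def c_def by (simp add: sum_distrib_left sum_subtractf[symmetric] power2_eq_square algebra_simps)
  have r: "(\<Sum>x\<in>E. \<Sum>y\<in>E. w x y * (f x - f y)^2) = a + b - 2 * c"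
    unfolding a_def b_def c_def
    by (simp add: sum_distrib_left sum_subtractf[symmetric] sum.distrib[symmetric] power2_eq_square algebra_simps)
  show ?thesis using l r ba by simp
qed

lemma w_nonneg: "x \<in> E \<Longrightarrow> y \<in> E \<Longrightarrow> 0 \<le> w x y"
  unfolding w_def using mu_nonneg nonneg by auto

lemma cut_bound:
  assumes S: "S \<subseteq> E" and f: "\<And>x. x \<in> E \<Longrightarrow> 0 \<le> f x \<and> f x \<le> 1"
  shows "(\<Sum>x\<in>S. \<Sum>y\<in>E. w x y * (f x - f y)) \<le> (\<Sum>x\<in>S. \<Sum>y\<in>E-S. w y x)"
proof -
  have finS: "finite S" using S fin finite_subset by blast
  have "(\<Sum>x\<in>S. \<Sum>y\<in>E. w x y * (f x - f y)) = (\<Sum>x\<in>S. \<Sum>y\<in>E. w y x * f x - w x y * f y)"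
  proof (rule sum.cong[OF refl])
    fix x assume x: "x \<in> S"
    have "(\<Sum>y\<in>E. w x y * (f x - f y)) = f x * (\<Sum>y\<in>E. w x y) - (\<Sum>y\<in>E. w x y * f y)"
      by (simp add: sum_distrib_left sum_subtractf algebra_simps)
    also have "\<dots> = f x * (\<Sum>y\<in>E. w y x) - (\<Sum>y\<in>E. w x y * f y)" using inv_w[of x] x S by auto
    also have "\<dots> = (\<Sum>y\<in>E. w y x * f x - w x y * f y)"
      by (simp add: sum_distrib_left sum_subtractf algebra_simps)
    finally show "(\<Sum>y\<in>E. w x y * (f x - f y)) = (\<Sum>y\<in>E. w y x * f x - w x y * f y)" .
  qed
  also have "\<dots> = (\<Sum>x\<in>S. \<Sum>y\<in>S. w y x * f x - w x y * f y) + (\<Sum>x\<in>S. \<Sum>y\<in>E-S. w y x * f x - w x y * f y)"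
    by (simp add: sum.distrib[symmetric] sum.subset_diff[OF S fin] add.commute)
  moreover have "(\<Sum>x\<in>S. \<Sum>y\<in>S. w y x * f x - w x y * f y) = 0"
  proof -
    have "(\<Sum>x\<in>S. \<Sum>y\<in>S. w x y * f y) = (\<Sum>x\<in>S. \<Sum>y\<in>S. w y x * f x)" by (rule sum.swap)
    then show ?thesis by (simp add: sum_subtractf)
  qed
  moreover have "(\<Sum>x\<in>S. \<Sum>y\<in>E-S. w y x * f x - w x y * f y) \<le> (\<Sum>x\<in>S. \<Sum>y\<in>E-S. w y x)"
  proof -
    have "\<And>x y. x \<in> S \<Longrightarrow> y \<in> E - S \<Longrightarrow> w y x * f x - w x y * f y \<le> w y x"
    proof -
      fix x y assume "x \<in> S" "y \<in> E - S"
      then have xy: "x \<in> E" "y \<in> E" using S by auto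
      have "w y x * f x \<le> w y x * 1" using f[OF xy(1)] w_nonneg[OF xy(2,1)] by (intro mult_left_mono) auto
      moreover have "0 \<le> w x y * f y" using f[OF xy(2)] w_nonneg[OF xy] by simp
      ultimately show "w y x * f x - w x y * f y \<le> w y x" by simp
    qed
    then show ?thesis by (intro sum_mono) auto
  qed
  ultimately show ?thesis by linarith
qed

end


lemma dirichlet:
  fixes w :: "'a \<Rightarrow> 'a \<Rightarrow> real"
  assumes fin: "finite E" and sym: "\<And>x y. x \<in> E \<Longrightarrow> y \<in> E \<Longrightarrow> w x y = w y x"
    and wnn: "\<And>x y. x \<in> E \<Longrightarrow> y \<in> E \<Longrightarrow> 0 \<le> w x y"
    and harm: "\<And>x. x \<in> E \<Longrightarrow> x \<notin> C \<Longrightarrow> (\<Sum>y\<in>E. w x y * (H x - H y)) = 0"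
    and bd: "\<And>x. x \<in> E \<Longrightarrow> x \<in> C \<Longrightarrow> f x = H x"
  shows "(\<Sum>x\<in>E. \<Sum>y\<in>E. w x y * (H x - H y)^2) \<le> (\<Sum>x\<in>E. \<Sum>y\<in>E. w x y * (f x - f y)^2)"
proof -
  define d where "d x = f x - H x" for x
  have T1: "(\<Sum>x\<in>E. \<Sum>y\<in>E. w x y * (H x - H y) * d x) = 0"
  proof -
    have "(\<Sum>x\<in>E. \<Sum>y\<in>E. w x y * (H x - H y) * d x) = (\<Sum>x\<in>E. d x * (\<Sum>y\<in>E. w x y * (H x - H y)))"
      by (simp add: sum_distrib_left mult.commute)
    also have "\<dots> = 0"
    proof (rule sum.neutral, rule ballI)
      fix x assume "x \<in> E" then show "d x * (\<Sum>y\<in>E. w x y * (H x - H y)) = 0"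
        using harm bd by (cases "x \<in> C") (auto simp: d_def)
    qed
    finally show ?thesis .
  qed
  have T2: "(\<Sum>x\<in>E. \<Sum>y\<in>E. w x y * (H x - H y) * d y) = - (\<Sum>x\<in>E. \<Sum>y\<in>E. w x y * (H x - H y) * d x)"
  proof -
    have "(\<Sum>x\<in>E. \<Sum>y\<in>E. w x y * (H x - H y) * d y) = (\<Sum>y\<in>E. \<Sum>x\<in>E. w x y * (H x - H y) * d y)"
      by (rule sum.swap)
    also have "\<dots> = (\<Sum>y\<in>E. \<Sum>x\<in>E. - (w y x * (H y - H x) * d y))"
      by (intro sum.cong refl) (simp add: sym algebra_simps)
    finally show ?thesis by (simp add: sum_negf)
  qed
  have eq: "(\<Sum>x\<in>E. \<Sum>y\<in>E. w x y * (f x - f y)^2) =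
     (\<Sum>x\<in>E. \<Sum>y\<in>E. w x y * (H x - H y)^2) + 2 * ((\<Sum>x\<in>E. \<Sum>y\<in>E. w x y * (H x - H y) * d x)
       - (\<Sum>x\<in>E. \<Sum>y\<in>E. w x y * (H x - H y) * d y)) + (\<Sum>x\<in>E. \<Sum>y\<in>E. w x y * (d x - d y)^2)"
  proof -
    have "\<And>x y. w x y * (f x - f y)^2 = w x y * (H x - H y)^2 + 2 * (w x y * (H x - H y) * d x - w x y * (H x - H y) * d y) + w x y * (d x - d y)^2"
      by (simp add: d_def power2_eq_square algebra_simps)
    then show ?thesis by (simp add: sum.distrib sum_subtractf sum_distrib_left)
  qed
  have "0 \<le> (\<Sum>x\<in>E. \<Sum>y\<in>E. w x y * (d x - d y)^2)"
    by (intro sum_nonneg mult_nonneg_nonneg wnn) auto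
  then show ?thesis using eq T1 T2 by simp
qed

lemma sym_cut:
  fixes w :: "'a \<Rightarrow> 'a \<Rightarrow> real"
  assumes fin: "finite E" and S: "S \<subseteq> E" and sym: "\<And>x y. x \<in> E \<Longrightarrow> y \<in> E \<Longrightarrow> w x y = w y x"
  shows "(\<Sum>x\<in>S. \<Sum>y\<in>E. w x y * (H x - H y)) = (\<Sum>x\<in>S. \<Sum>y\<in>E-S. w x y * (H x - H y))"
proof -
  have "(\<Sum>x\<in>S. \<Sum>y\<in>E. w x y * (H x - H y)) = (\<Sum>x\<in>S. \<Sum>y\<in>S. w x y * (H x - H y)) + (\<Sum>x\<in>S. \<Sum>y\<in>E-S. w x y * (H x - H y))"
    by (simp add: sum.distrib[symmetric] sum.subset_diff[OF S fin] add.commute)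
  moreover have "(\<Sum>x\<in>S. \<Sum>y\<in>S. w x y * (H x - H y)) = 0"
  proof -
    have "(\<Sum>x\<in>S. \<Sum>y\<in>S. w x y * H y) = (\<Sum>y\<in>S. \<Sum>x\<in>S. w x y * H y)" by (rule sum.swap)
    also have "\<dots> = (\<Sum>y\<in>S. \<Sum>x\<in>S. w y x * H y)" by (intro sum.cong refl) (metis S subsetD sym)
    finally show ?thesis by (simp add: sum_subtractf right_diff_distrib)
  qed
  ultimately show ?thesis by simp
qed

lemma gap:
  fixes V :: "real set"
  assumes "finite V" "a \<in> V" "b \<in> V" "a < b"
  shows "\<exists>t\<in>V. \<exists>\<delta>>0. a < t \<and> t \<le> b \<and> \<delta> * (real (card V) - 1) \<ge> b - a \<and> (\<forall>v\<in>V. v \<ge> t \<or> v \<le> t - \<delta>)"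
  using assms
proof (induction "card V" arbitrary: V b rule: less_induct)
  case less
  define V' where "V' = {v\<in>V. v < b}"
  have fV': "finite V'" "V' \<noteq> {}" "a \<in> V'" using less.prems by (auto simp: V'_def)
  define s where "s = Max V'"
  have sV': "s \<in> V'" unfolding s_def using fV' by (intro Max_in) auto
  have as: "a \<le> s" unfolding s_def using fV' by (intro Max_ge) auto
  have sb: "s < b" "s \<in> V" using sV' by (auto simp: V'_def)
  have below: "\<And>v. v \<in> V \<Longrightarrow> v < b \<Longrightarrow> v \<le> s" unfolding s_def using fV' by (intro Max_ge) (auto simp: V'_def)
  have c2: "card V \<ge> 2"
  proof -
    have "{a, b} \<subseteq> V" using less.prems by auto
    then have "card {a, b} \<le> card V" using less.prems(1) by (rule card_mono[rotated])
    then show ?thesis using less.prems(4) by simp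
  qed
  show ?case
  proof (cases "(b - s) * (real (card V) - 1) \<ge> b - a")
    case True
    show ?thesis
      using True sb below less.prems as
      by (intro bexI[of _ b] exI[of _ "b - s"]) force+
  next
    case False
    have as': "a < s"
    proof (rule ccontr)
      assume "\<not> a < s" then have "s = a" using as by simp
      moreover have "(b - a) * 1 \<le> (b - a) * (real (card V) - 1)"
        using c2 less.prems(4) by (intro mult_left_mono) auto
      ultimately show False using False by simp
    qed
    have cV: "card (V - {b}) < card V" using less.prems by (intro card_Diff1_less) auto
    obtain t \<delta> where t: "t \<in> V - {b}" "\<delta> > 0" "a < t" "t \<le> s"
        "\<delta> * (real (card (V - {b})) - 1) \<ge> s - a" "\<forall>v\<in>V - {b}. v \<ge> t \<or> v \<le> t - \<delta>"
      using less.hyps[OF cV, of s] less.prems as' sb by auto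
    have cVb: "real (card (V - {b})) = real (card V) - 1" using less.prems c2 by (simp add: of_nat_diff)
    define m where "m = real (card V) - 1"
    have m1: "m \<ge> 1" using c2 by (simp add: m_def)
    have h1: "\<delta> * (m - 1) \<ge> s - a" using t(5) cVb by (simp add: m_def)
    have h2: "(b - s) * m < b - a" using False by (simp add: m_def)
    have goal: "\<delta> * m \<ge> b - a"
    proof (rule ccontr)
      assume c: "\<not> \<delta> * m \<ge> b - a"
      have "(s - a) * m \<le> \<delta> * (m - 1) * m" using h1 m1 by (intro mult_right_mono) auto
      moreover have "\<delta> * m * (m - 1) \<le> (b - a) * (m - 1)" using c m1 by (intro mult_right_mono) auto
      ultimately have "(s - a) * m \<le> (b - a) * (m - 1)" by (simp add: algebra_simps)
      with h2 show False by (simp add: algebra_simps)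
    qed
    show ?thesis
      using t goal less.prems(4) sb by (intro bexI[of _ t] exI[of _ \<delta>]) (auto simp: m_def)
  qed
qed



theorem corollary4p6:
  fixes E :: "'a set" and R :: "'a \<Rightarrow> 'a \<Rightarrow> real" and \<mu> :: "'a \<Rightarrow> real"
    and A B :: "'a set"
  assumes "finite E"
    and "\<forall>x\<in>E. \<forall>y\<in>E. x \<noteq> y \<longrightarrow> R x y \<ge> 0"
    and "irreducible E R"
    and "invariant_prob E R \<mu>"
    and "A \<subseteq> E" and "B \<subseteq> E" and "A \<noteq> {}" and "B \<noteq> {}" and "A \<inter> B = {}"
  shows "capacity E (reversible_rates R \<mu>) \<mu> A B \<le> capacity E R \<mu> A B \<and>
         capacity E R \<mu> A B \<le> 2 * real (card E) * capacity E (reversible_rates R \<mu>) \<mu> A B"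
proof -
  note fin = assms(1)
  have Rnn: "\<And>x y. x \<in> E \<Longrightarrow> y \<in> E \<Longrightarrow> x \<noteq> y \<Longrightarrow> 0 \<le> R x y" using assms(2) by auto
  have munn: "\<And>x. x \<in> E \<Longrightarrow> 0 \<le> \<mu> x" and musum: "(\<Sum>x\<in>E. \<mu> x) = 1"
    and inv: "\<And>y. y \<in> E \<Longrightarrow> (\<Sum>x\<in>E - {y}. \<mu> x * R x y) = \<mu> y * hold_rate E R y"
    using assms(4) unfolding invariant_prob_def by auto
  define r where "r = {(u, v). u \<in> E \<and> v \<in> E \<and> u \<noteq> v \<and> R u v > 0}"
  have irr: "\<And>x y. x \<in> E \<Longrightarrow> y \<in> E \<Longrightarrow> (x, y) \<in> r\<^sup>*"
    using assms(3) unfolding irreducible_def r_def by auto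
  have mupos: "\<And>x. x \<in> E \<Longrightarrow> 0 < \<mu> x"
  proof (rule ccontr)
    fix x assume xE: "x \<in> E" and "\<not> 0 < \<mu> x"
    then have mx: "\<mu> x = 0" using munn[OF xE] by simp
    have "\<forall>y\<in>E. \<mu> y = 0"
    proof
      fix y assume yE: "y \<in> E"
      have "(y, x) \<in> r\<^sup>*" by (rule irr[OF yE xE])
      then show "\<mu> y = 0"
      proof (induction rule: converse_rtrancl_induct)
        case base then show ?case by (rule mx)
      next
        case (step u z)
        then have u: "u \<in> E" "z \<in> E" "u \<noteq> z" "R u z > 0" by (auto simp: r_def)
        have "(\<Sum>v\<in>E - {z}. \<mu> v * R v z) = 0" using inv[OF u(2)] step.IH by simp
        moreover have "\<forall>v\<in>E - {z}. 0 \<le> \<mu> v * R v z" using munn Rnn u(2) by (auto intro!: mult_nonneg_nonneg)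
        ultimately have "\<forall>v\<in>E - {z}. \<mu> v * R v z = 0" using sum_nonneg_eq_0_iff[of "E - {z}" "\<lambda>v. \<mu> v * R v z"] fin by blast
        then have "\<mu> u * R u z = 0" using u by auto
        then show ?case using u(4) by simp
      qed
    qed
    then show False using musum by simp
  qed
  have hpos: "\<And>x. x \<in> E \<Longrightarrow> 0 < hold_rate E R x"
  proof -
    fix x assume xE: "x \<in> E"
    obtain y where y: "y \<in> E" "y \<noteq> x" using assms(5-9) by blast
    from irr[OF xE y(1)] obtain z where "(x, z) \<in> r"
      using y(2) by (auto elim: converse_rtranclE)
    then have z: "z \<in> E - {x}" "R x z > 0" by (auto simp: r_def)
    have "0 < R x z" by (rule z(2))
    also have "R x z \<le> hold_rate E R x" unfolding hold_rate_def
      using fin z(1) Rnn xE by (intro member_le_sum) auto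
    finally show "0 < hold_rate E R x" .
  qed
  define Rs where "Rs = reversible_rates R \<mu>"
  have muRs: "\<And>x y. x \<in> E \<Longrightarrow> \<mu> x * Rs x y = (\<mu> x * R x y + \<mu> y * R y x) / 2"
  proof -
    fix x y assume "x \<in> E" then have "\<mu> x > 0" by (rule mupos)
    then show "\<mu> x * Rs x y = (\<mu> x * R x y + \<mu> y * R y x) / 2"
      by (simp add: Rs_def reversible_rates_def field_simps)
  qed
  have hRs: "\<And>x. x \<in> E \<Longrightarrow> hold_rate E Rs x = hold_rate E R x"
  proof -
    fix x assume xE: "x \<in> E"
    have "\<mu> x * hold_rate E Rs x = (\<Sum>y\<in>E-{x}. \<mu> x * Rs x y)" by (simp add: hold_rate_def sum_distrib_left)
    also have "\<dots> = (\<Sum>y\<in>E-{x}. (\<mu> x * R x y + \<mu> y * R y x) / 2)"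
      by (intro sum.cong refl) (rule muRs[OF xE])
    also have "\<dots> = ((\<Sum>y\<in>E-{x}. \<mu> x * R x y) + (\<Sum>y\<in>E-{x}. \<mu> y * R y x)) / 2"
      by (simp add: sum.distrib sum_divide_distrib[symmetric])
    also have "\<dots> = \<mu> x * hold_rate E R x" using inv[OF xE] by (simp add: hold_rate_def sum_distrib_left[symmetric])
    finally show "hold_rate E Rs x = hold_rate E R x" using mupos[OF xE] by simp
  qed
  interpret Rc: ctmc E R \<mu> A B
    using assms(5,6,9) fin munn Rnn hpos inv by unfold_locales auto
  interpret Sc: ctmc E Rs \<mu> A B
  proof unfold_locales
    show "\<And>x y. x \<in> E \<Longrightarrow> y \<in> E \<Longrightarrow> x \<noteq> y \<Longrightarrow> 0 \<le> Rs x y"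
      using Rnn mupos munn by (simp add: Rs_def reversible_rates_def)
    show "\<And>x. x \<in> E \<Longrightarrow> 0 < hold_rate E Rs x" using hRs hpos by simp
    fix y assume yE: "y \<in> E"
    have "(\<Sum>x\<in>E-{y}. \<mu> x * Rs x y) = (\<Sum>x\<in>E-{y}. (\<mu> x * R x y + \<mu> y * R y x) / 2)"
      by (intro sum.cong refl) (rule muRs, auto)
    also have "\<dots> = ((\<Sum>x\<in>E-{y}. \<mu> x * R x y) + (\<Sum>x\<in>E-{y}. \<mu> y * R y x)) / 2"
      by (simp add: sum.distrib sum_divide_distrib[symmetric])
    also have "\<dots> = \<mu> y * hold_rate E Rs y" using inv[OF yE] hRs[OF yE] by (simp add: hold_rate_def sum_distrib_left[symmetric])
    finally show "(\<Sum>x\<in>E-{y}. \<mu> x * Rs x y) = \<mu> y * hold_rate E Rs y" .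
  qed (use assms(5,6,9) fin munn in auto)
  have ws: "\<And>x y. x \<in> E \<Longrightarrow> Sc.w x y = (Rc.w x y + Rc.w y x) / 2"
    using muRs by (auto simp: Sc.w_def Rc.w_def)
  have wsym: "\<And>x y. x \<in> E \<Longrightarrow> y \<in> E \<Longrightarrow> Sc.w x y = Sc.w y x" by (simp add: ws add.commute)
  have Deq: "\<And>f. (\<Sum>x\<in>E. \<Sum>y\<in>E. Sc.w x y * (f x - f y)^2) = (\<Sum>x\<in>E. \<Sum>y\<in>E. Rc.w x y * (f x - f y)^2)"
  proof -
    fix f :: "'a \<Rightarrow> real"
    have "(\<Sum>x\<in>E. \<Sum>y\<in>E. Rc.w y x * (f x - f y)^2) = (\<Sum>y\<in>E. \<Sum>x\<in>E. Rc.w y x * (f x - f y)^2)"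
      by (rule sum.swap)
    also have "\<dots> = (\<Sum>x\<in>E. \<Sum>y\<in>E. Rc.w x y * (f x - f y)^2)"
      by (simp add: power2_commute)
    finally have e: "(\<Sum>x\<in>E. \<Sum>y\<in>E. Rc.w y x * (f x - f y)^2) = (\<Sum>x\<in>E. \<Sum>y\<in>E. Rc.w x y * (f x - f y)^2)" .
    have "(\<Sum>x\<in>E. \<Sum>y\<in>E. Sc.w x y * (f x - f y)^2) =
      ((\<Sum>x\<in>E. \<Sum>y\<in>E. Rc.w x y * (f x - f y)^2) + (\<Sum>x\<in>E. \<Sum>y\<in>E. Rc.w y x * (f x - f y)^2)) / 2"
    proof -
      have "(\<Sum>x\<in>E. \<Sum>y\<in>E. Sc.w x y * (f x - f y)^2) =
        (\<Sum>x\<in>E. \<Sum>y\<in>E. (Rc.w x y * (f x - f y)^2 + Rc.w y x * (f x - f y)^2) / 2)"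
        by (intro sum.cong refl) (simp add: ws algebra_simps)
      then show ?thesis by (simp only: sum_divide_distrib[symmetric] sum.distrib)
    qed
    then show "?thesis f" using e by simp
  qed
  have capR: "capacity E R \<mu> A B = (\<Sum>x\<in>E. \<Sum>y\<in>E. Rc.w x y * (Rc.h x - Rc.h y)^2) / 2"
    using Rc.cap_formula[of Rc.h] Rc.h_A Rc.h_B Rc.energy[of Rc.h] by simp
  have capS: "capacity E Rs \<mu> A B = (\<Sum>x\<in>E. \<Sum>y\<in>E. Sc.w x y * (Sc.h x - Sc.h y)^2) / 2"
    using Sc.cap_formula[of Sc.h] Sc.h_A Sc.h_B Sc.energy[of Sc.h] by simp
  have low: "capacity E Rs \<mu> A B \<le> capacity E R \<mu> A B"
  proof -
    have "(\<Sum>x\<in>E. \<Sum>y\<in>E. Sc.w x y * (Sc.h x - Sc.h y)^2) \<le> (\<Sum>x\<in>E. \<Sum>y\<in>E. Sc.w x y * (Rc.h x - Rc.h y)^2)"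
      using fin wsym Sc.w_nonneg Sc.harmonic
      by (rule dirichlet[where C = "A \<union> B"]) (auto simp: Rc.h_A Rc.h_B Sc.h_A Sc.h_B)
    then show ?thesis using capR capS Deq[of Rc.h] by simp
  qed
  define V where "V = Sc.h ` E"
  have fV: "finite V" using fin by (simp add: V_def)
  obtain a0 b0 where a0: "a0 \<in> A" and b0: "b0 \<in> B" using assms(7,8) by blast
  have V0: "0 \<in> V" using b0 assms(6) Sc.h_B[OF b0] unfolding V_def by (metis image_eqI subsetD)
  have V1: "1 \<in> V" using a0 assms(5) Sc.h_A[OF a0] unfolding V_def by (metis image_eqI subsetD)
  obtain t \<delta> where t: "t \<in> V" "\<delta> > 0" "0 < t" "t \<le> 1" "\<delta> * (real (card V) - 1) \<ge> 1 - 0"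
    "\<forall>v\<in>V. v \<ge> t \<or> v \<le> t - \<delta>"
    using gap[OF fV V0 V1] by auto
  have cVE: "card V \<le> card E" unfolding V_def by (rule card_image_le[OF fin])
  have dE: "\<delta> * real (card E) \<ge> 1"
  proof -
    have "\<delta> * (real (card V) - 1) \<le> \<delta> * real (card E)" using cVE t(2) by (intro mult_left_mono) auto
    then show ?thesis using t(5) by simp
  qed
  define S where "S = {x\<in>E. t \<le> Sc.h x}"
  have SE: "S \<subseteq> E" by (auto simp: S_def)
  define C where "C = (\<Sum>x\<in>S. \<Sum>y\<in>E-S. Sc.w x y)"
  have C0: "0 \<le> C" unfolding C_def using SE by (intro sum_nonneg Sc.w_nonneg) auto
  define f where "f x = (if t \<le> Sc.h x then 1 else 0::real)" for x
  have fA: "\<And>x. x \<in> A \<Longrightarrow> f x = 1" using Sc.h_A t(4) by (simp add: f_def)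
  have fB: "\<And>x. x \<in> B \<Longrightarrow> f x = 0" using Sc.h_B t(3) by (simp add: f_def)
  have restr: "\<And>F. (\<Sum>x\<in>E. f x * F x) = (\<Sum>x\<in>S. F x)"
    unfolding S_def f_def using fin by (simp add: sum.inter_filter) (intro sum.cong refl, simp)
  have up1: "capacity E R \<mu> A B \<le> 2 * C"
  proof -
    have "capacity E R \<mu> A B = (\<Sum>x\<in>S. \<Sum>y\<in>E. Rc.w x y * (Rc.h x - Rc.h y))"
      using Rc.cap_formula[of f] fA fB restr by simp
    also have "\<dots> \<le> (\<Sum>x\<in>S. \<Sum>y\<in>E-S. Rc.w y x)" using Rc.cut_bound[OF SE] Rc.h_bounds by blast
    also have "\<dots> \<le> (\<Sum>x\<in>S. \<Sum>y\<in>E-S. 2 * Sc.w x y)"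
    proof (intro sum_mono)
      fix x y assume "x \<in> S" "y \<in> E - S"
      then have "x \<in> E" "y \<in> E" using SE by auto
      then show "Rc.w y x \<le> 2 * Sc.w x y" using ws[of x y] Rc.w_nonneg[of x y] by simp
    qed
    finally show ?thesis by (simp add: C_def sum_distrib_left)
  qed
  have up2: "\<delta> * C \<le> capacity E Rs \<mu> A B"
  proof -
    have "capacity E Rs \<mu> A B = (\<Sum>x\<in>S. \<Sum>y\<in>E. Sc.w x y * (Sc.h x - Sc.h y))"
      using Sc.cap_formula[of f] fA fB restr by simp
    also have "\<dots> = (\<Sum>x\<in>S. \<Sum>y\<in>E-S. Sc.w x y * (Sc.h x - Sc.h y))"
      by (rule sym_cut[OF fin SE wsym])
    also have "\<dots> \<ge> (\<Sum>x\<in>S. \<Sum>y\<in>E-S. Sc.w x y * \<delta>)"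
    proof (intro sum_mono)
      fix x y assume x: "x \<in> S" and y: "y \<in> E - S"
      have "Sc.h y \<in> V" using y by (auto simp: V_def)
      then have "Sc.h y \<le> t - \<delta>" using t(6) y by (auto simp: S_def)
      moreover have "t \<le> Sc.h x" using x by (auto simp: S_def)
      ultimately show "Sc.w x y * \<delta> \<le> Sc.w x y * (Sc.h x - Sc.h y)"
        using Sc.w_nonneg[of x y] x y SE by (intro mult_left_mono) auto
    qed
    finally show ?thesis by (simp add: C_def sum_distrib_left mult.commute)
  qed
  have "capacity E R \<mu> A B \<le> 2 * C" by (rule up1)
  also have "\<dots> \<le> 2 * (\<delta> * real (card E)) * C" using dE C0 by (simp add: mult_right_mono)
  also have "\<dots> = 2 * real (card E) * (\<delta> * C)" by simp
  also have "\<dots> \<le> 2 * real (card E) * capacity E Rs \<mu> A B" using up2 by (intro mult_left_mono) auto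
  finally show ?thesis using low by (simp add: Rs_def)
qed

end
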